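(* Let $t \in \mathbb{N}$. For a PLD realization $L$, define the random variables \[ \psi^{\mathrm{rem}}_{t}(L) \coloneqq \ln\!\left(\frac{1}{t}\Big(e^{L} + \sum_{i \in [t-1]} e^{-\widetilde{L}_{i}}\Big)\right), \qquad \psi^{\mathrm{add}}_{t}(L) \coloneqq -\ln\!\left(\frac{1}{t} \sum_{i \in [t]} e^{-L_{i}}\right), \] where $L, L_1, \ldots, L_t$ are independent copies of $L$, and $\widetilde{L}_1, \ldots, \widetilde{L}_{t-1}$ are independent copies of the PLD dual $\widetilde{L}$ of $L$ (independent of $L$). Then for any two distributions $P, Q$ on a common domain $\Omega$, $\mathcal{L}_{\bar{P}_{t}/Q^{t}}$ is distributed as $\psi^{\mathrm{rem}}_{t}(\mathcal{L}_{P/Q})$ and $\mathcal{L}_{Q^{t}/\bar{P}_{t}}$ is distributed as $\psi^{\mathrm{add}}_{t}(\mathcal{L}_{Q/P})$.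
   Context: Privacy loss random variable: for distributions $P,Q$ on $\Omega$, $\mathcal{L}_{P/Q}$ is the random variable $\ln\big(P(\omega)/Q(\omega)\big)$ with $\omega \sim P$ (values in $[-\infty,\infty]$). A discrete random variable $L$ on $[-\infty,\infty]$ with PMF $f_L$ is a PLD realization if $\mathbb{E}[e^{-L}] \le 1$ and $f_L(-\infty)=0$; its PLD dual $\widetilde{L}$ has PMF $f_{\widetilde{L}}(l) = f_L(-l) e^{l}$ for finite $l$ and an atom at $+\infty$ of mass $1 - \mathbb{E}[e^{-L}]$. $Q^{t}$ denotes the product distribution of $t$ independent draws from $Q$ on $\Omega^t$, and $\bar{P}_{t} \coloneqq \frac{1}{t}\sum_{i \in [t]} Q^{i-1} \times P \times Q^{t-i}$ (the output distribution of random allocation of one element to one of $t$ steps). *)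

theory Defs
  imports "HOL-Probability.Probability"
begin

fun eexp :: "ereal \<Rightarrow> ennreal" where
  "eexp (ereal x) = ennreal (exp x)"
| "eexp PInfty = \<infinity>"
| "eexp MInfty = 0"

definition eln :: "ennreal \<Rightarrow> ereal" where
  "eln x = (if x = 0 then -\<infinity> else if x = \<infinity> then \<infinity> else ereal (ln (enn2real x)))"

definition privacy_loss :: "'a pmf \<Rightarrow> 'a pmf \<Rightarrow> ereal pmf" where
  "privacy_loss P Q = map_pmf
     (\<lambda>\<omega>. if pmf Q \<omega> = 0 then \<infinity> else ereal (ln (pmf P \<omega> / pmf Q \<omega>))) P"

definition exp_neg_moment :: "ereal pmf \<Rightarrow> ennreal" where
  "exp_neg_moment L = (\<integral>\<^sup>+ x. eexp (- x) \<partial>measure_pmf L)"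

definition pld_realization :: "ereal pmf \<Rightarrow> bool" where
  "pld_realization L \<longleftrightarrow> exp_neg_moment L \<le> 1 \<and> pmf L (-\<infinity>) = 0"

definition pld_dual :: "ereal pmf \<Rightarrow> ereal pmf" where
  "pld_dual L = embed_pmf (\<lambda>y. case y of
       ereal l \<Rightarrow> pmf L (ereal (- l)) * exp l
     | PInfty \<Rightarrow> 1 - enn2real (exp_neg_moment L)
     | MInfty \<Rightarrow> 0)"

text \<open>Q^t on \<Omega>^t, with \<Omega>^t represented as functions on {0..<t} (0-indexed).\<close>
definition prod_pmf :: "nat \<Rightarrow> 'a pmf \<Rightarrow> (nat \<Rightarrow> 'a) pmf" where
  "prod_pmf t Q = Pi_pmf {..<t} undefined (\<lambda>_. Q)"

text \<open>\<bar>P_t = (1/t) \<Sum>_i Q^{i-1} \<times> P \<times> Q^{t-i}: uniform mixture over the position i.\<close>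
definition alloc_pmf :: "nat \<Rightarrow> 'a pmf \<Rightarrow> 'a pmf \<Rightarrow> (nat \<Rightarrow> 'a) pmf" where
  "alloc_pmf t P Q = pmf_of_set {..<t} \<bind>
     (\<lambda>i. Pi_pmf {..<t} undefined (\<lambda>j. if j = i then P else Q))"

definition psi_rem :: "nat \<Rightarrow> ereal pmf \<Rightarrow> ereal pmf" where
  "psi_rem t L = map_pmf
     (\<lambda>(x, ys). eln (ennreal (1 / real t) * (eexp x + (\<Sum>i<t - 1. eexp (- ys i)))))
     (pair_pmf L (prod_pmf (t - 1) (pld_dual L)))"

definition psi_add :: "nat \<Rightarrow> ereal pmf \<Rightarrow> ereal pmf" where
  "psi_add t L = map_pmf
     (\<lambda>xs. - eln (ennreal (1 / real t) * (\<Sum>i<t. eexp (- xs i))))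
     (prod_pmf t L)"

end

theory Submission
  imports Defs
begin

fun SD :: "('c \<Rightarrow> 'b::comm_monoid_add) \<Rightarrow> 'c pmf \<Rightarrow> nat \<Rightarrow> 'b pmf" where
  "SD g R 0 = return_pmf 0"
| "SD g R (Suc n) = map_pmf (\<lambda>(y, s). g y + s) (pair_pmf R (SD g R n))"

lemma sum_Pi_SD:
  assumes "finite A"
  shows "map_pmf (\<lambda>f. \<Sum>j\<in>A. g (f j)) (Pi_pmf A d (\<lambda>_. R)) = SD g R (card A)"
  using assms
proof (induction A rule: finite_induct)
  case empty
  then show ?case by simp
next
  case (insert x A)
  have s: "(\<Sum>j\<in>insert x A. g ((f(x := y)) j)) = g y + (\<Sum>j\<in>A. g (f j))" for f y
  proof -
    have "(\<Sum>j\<in>A. g ((f(x := y)) j)) = (\<Sum>j\<in>A. g (f j))"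
      using insert(2) by (intro sum.cong) auto
    then show ?thesis using insert(1,2) by simp
  qed
  have "map_pmf (\<lambda>f. \<Sum>j\<in>insert x A. g (f j)) (Pi_pmf (insert x A) d (\<lambda>_. R))
      = map_pmf (\<lambda>(y, f). g y + (\<Sum>j\<in>A. g (f j))) (pair_pmf R (Pi_pmf A d (\<lambda>_. R)))"
    unfolding Pi_pmf_insert[OF insert(1,2)] map_pmf_comp
    by (rule map_pmf_cong) (auto simp del: fun_upd_apply simp add: s)
  also have "\<dots> = map_pmf (\<lambda>(y, s). g y + s) (pair_pmf R (map_pmf (\<lambda>f. \<Sum>j\<in>A. g (f j)) (Pi_pmf A d (\<lambda>_. R))))"
    by (simp add: pair_map_pmf2 map_pmf_comp split_beta')
  finally show ?case using insert by simp
qed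

lemma SD_cong:
  assumes "\<And>x. x \<in> set_pmf R \<Longrightarrow> g x = g' x"
  shows "SD g R n = SD g' R n"
  by (induction n) (auto intro!: map_pmf_cong simp: assms)

lemma SD_map: "SD g (map_pmf h R) n = SD (\<lambda>x. g (h x)) R n"
  by (induction n) (simp_all add: pair_map_pmf1 map_pmf_comp case_prod_beta split_beta')

lemma eexp_minf [simp]: "eexp (- \<infinity>) = 0"
  by (metis MInfty_eq_minfinity eexp.simps(3))

lemma eexp_pinf [simp]: "eexp \<infinity> = \<infinity>"
  by (metis PInfty_eq_infinity eexp.simps(2))

lemma pmf_map_nn:
  "ennreal (pmf (map_pmf f p) z) = (\<integral>\<^sup>+ x. ennreal (pmf p x) * indicator {x. f x = z} x \<partial>count_space UNIV)"
proof -
  have "ennreal (pmf (map_pmf f p) z) = emeasure (measure_pmf p) {x. f x = z}"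
    by (simp add: emeasure_pmf_single[symmetric] vimage_def)
  also have "\<dots> = (\<integral>\<^sup>+ x. indicator {x. f x = z} x \<partial>measure_pmf p)"
    by (simp add: nn_integral_indicator)
  also have "\<dots> = (\<integral>\<^sup>+ x. ennreal (pmf p x) * indicator {x. f x = z} x \<partial>count_space UNIV)"
    by (simp add: nn_integral_measure_pmf)
  finally show ?thesis .
qed

lemma dual_eq: "pld_dual (privacy_loss P Q) = privacy_loss Q P"
proof -
  define L where "L = privacy_loss P Q"
  define D where "D = privacy_loss Q P"
  define lam where "lam = (\<lambda>\<omega>. if pmf Q \<omega> = 0 then \<infinity> else ereal (ln (pmf P \<omega> / pmf Q \<omega>)))"
  define mu where "mu = (\<lambda>\<omega>. if pmf P \<omega> = 0 then \<infinity> else ereal (ln (pmf Q \<omega> / pmf P \<omega>)))"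
  have L: "L = map_pmf lam P" unfolding L_def lam_def privacy_loss_def ..
  have D: "D = map_pmf mu Q" unfolding D_def mu_def privacy_loss_def ..
  have fin: "pmf L (ereal (- l)) * exp l = pmf D (ereal l)" for l
  proof -
    define S where "S = {\<omega>. pmf P \<omega> \<noteq> 0 \<and> pmf Q \<omega> \<noteq> 0 \<and> pmf Q \<omega> = pmf P \<omega> * exp l}"
    have "ennreal (pmf D (ereal l)) = (\<integral>\<^sup>+ x. ennreal (pmf Q x) * indicator S x \<partial>count_space UNIV)"
      unfolding D pmf_map_nn
    proof (intro nn_integral_cong)
      fix x
      show "ennreal (pmf Q x) * indicator {x. mu x = ereal l} x = ennreal (pmf Q x) * indicator S x"
      proof (cases "pmf Q x = 0 \<or> pmf P x = 0")
        case True then show ?thesis by (auto simp: mu_def S_def indicator_def)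
      next
        case False
        then have pos: "pmf Q x > 0" "pmf P x > 0" by (auto simp: pmf_nonneg order.order_iff_strict)
        have "(ln (pmf Q x / pmf P x) = l) = (pmf Q x / pmf P x = exp l)"
          using pos by (metis divide_pos_pos exp_ln ln_exp)
        also have "\<dots> = (pmf Q x = pmf P x * exp l)" using pos by (auto simp: field_simps)
        finally show ?thesis using False by (auto simp: mu_def S_def indicator_def)
      qed
    qed
    also have "\<dots> = (\<integral>\<^sup>+ x. ennreal (exp l) * (ennreal (pmf P x) * indicator S x) \<partial>count_space UNIV)"
      by (intro nn_integral_cong) (auto simp: S_def indicator_def ennreal_mult'' mult.commute)
    also have "\<dots> = ennreal (exp l) * (\<integral>\<^sup>+ x. ennreal (pmf P x) * indicator S x \<partial>count_space UNIV)"
      by (simp add: nn_integral_cmult)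
    also have "(\<integral>\<^sup>+ x. ennreal (pmf P x) * indicator S x \<partial>count_space UNIV) = ennreal (pmf L (ereal (- l)))"
      unfolding L pmf_map_nn
    proof (intro nn_integral_cong)
      fix x
      show "ennreal (pmf P x) * indicator S x = ennreal (pmf P x) * indicator {x. lam x = ereal (- l)} x"
      proof (cases "pmf Q x = 0 \<or> pmf P x = 0")
        case True then show ?thesis by (auto simp: lam_def S_def indicator_def)
      next
        case False
        then have pos: "pmf Q x > 0" "pmf P x > 0" by (auto simp: pmf_nonneg order.order_iff_strict)
        have "(ln (pmf P x / pmf Q x) = - l) = (pmf P x / pmf Q x = exp (- l))"
          using pos by (metis divide_pos_pos exp_ln ln_exp)
        also have "\<dots> = (pmf Q x = pmf P x * exp l)" using pos by (auto simp: field_simps exp_minus)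
        finally show ?thesis using False by (auto simp: lam_def S_def indicator_def)
      qed
    qed
    finally have "ennreal (pmf D (ereal l)) = ennreal (exp l * pmf L (ereal (- l)))"
      by (simp add: ennreal_mult'')
    then show ?thesis by (simp add: pmf_nonneg mult.commute)
  qed
  have minf: "pmf D (-\<infinity>) = 0"
    unfolding D by (simp add: pmf_map mu_def vimage_def)
  have pinf: "1 - enn2real (exp_neg_moment L) = pmf D \<infinity>"
  proof -
    have "exp_neg_moment L = (\<integral>\<^sup>+ x. ennreal (pmf P x) * eexp (- lam x) \<partial>count_space UNIV)"
      unfolding exp_neg_moment_def L nn_integral_map_pmf by (rule nn_integral_measure_pmf)
    also have "\<dots> = (\<integral>\<^sup>+ x. ennreal (pmf Q x) * indicator {x. pmf P x \<noteq> 0} x \<partial>count_space UNIV)"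
    proof (intro nn_integral_cong)
      fix x
      show "ennreal (pmf P x) * eexp (- lam x) = ennreal (pmf Q x) * indicator {x. pmf P x \<noteq> 0} x"
      proof (cases "pmf Q x = 0 \<or> pmf P x = 0")
        case True then show ?thesis by (auto simp: lam_def indicator_def)
      next
        case False
        then have pos: "pmf Q x > 0" "pmf P x > 0" by (auto simp: pmf_nonneg order.order_iff_strict)
        have "exp (- ln (pmf P x / pmf Q x)) = pmf Q x / pmf P x"
          using pos by (simp add: exp_minus)
        then show ?thesis using False pos
          by (auto simp: lam_def indicator_def ennreal_mult''[symmetric])
      qed
    qed
    also have "\<dots> = emeasure (measure_pmf Q) {x. pmf P x \<noteq> 0}"
      by (simp add: nn_integral_measure_pmf[symmetric] nn_integral_indicator)
    also have "\<dots> = ennreal (measure Q {x. pmf P x \<noteq> 0})"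
      by (simp add: measure_pmf.emeasure_eq_measure)
    finally have "enn2real (exp_neg_moment L) = measure Q {x. pmf P x \<noteq> 0}" by simp
    moreover have "pmf D \<infinity> = measure Q {x. pmf P x = 0}"
      unfolding D by (simp add: pmf_map mu_def vimage_def)
    moreover have "measure Q {x. pmf P x = 0} = 1 - measure Q {x. pmf P x \<noteq> 0}"
    proof -
      have "{x. pmf P x = 0} = UNIV - {x. pmf P x \<noteq> 0}" by auto
      then show ?thesis using measure_pmf.prob_compl[of "{x. pmf P x \<noteq> 0}" Q] by simp
    qed
    ultimately show ?thesis by simp
  qed
  have feq: "(\<lambda>y. case y of ereal l \<Rightarrow> pmf L (ereal (- l)) * exp l
       | PInfty \<Rightarrow> 1 - enn2real (exp_neg_moment L) | MInfty \<Rightarrow> 0) = pmf D"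
  proof
    fix y show "(case y of ereal l \<Rightarrow> pmf L (ereal (- l)) * exp l
       | PInfty \<Rightarrow> 1 - enn2real (exp_neg_moment L) | MInfty \<Rightarrow> 0) = pmf D y"
      by (cases y) (simp_all add: fin pinf minf)
  qed
  show ?thesis
    unfolding L_def[symmetric] D_def[symmetric] pld_dual_def feq
    by (rule type_definition.Rep_inverse[OF td_pmf_embed_pmf])
qed



lemma pair_sum_Pi_SD:
  assumes "finite A"
  shows "map_pmf (\<lambda>(x, f). G x (\<Sum>j\<in>A. g (f j))) (pair_pmf X (Pi_pmf A d (\<lambda>_. R)))
       = map_pmf (\<lambda>(x, s). G x s) (pair_pmf X (SD g R (card A)))"
  unfolding sum_Pi_SD[OF assms, of g d R, symmetric] pair_map_pmf2 map_pmf_comp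
  by (rule map_pmf_cong) auto

lemma pmf_prod_pmf:
  "(\<forall>j. j \<notin> {..<t} \<longrightarrow> \<omega> j = undefined) \<Longrightarrow> pmf (prod_pmf t Q) \<omega> = (\<Prod>j<t. pmf Q (\<omega> j))"
  unfolding prod_pmf_def by (rule pmf_Pi') auto

lemma pmf_alloc:
  assumes "t \<ge> 1" "\<forall>j. j \<notin> {..<t} \<longrightarrow> \<omega> j = undefined"
  shows "pmf (alloc_pmf t P Q) \<omega> = (\<Sum>i<t. \<Prod>j<t. pmf (if j = i then P else Q) (\<omega> j)) / t"
  unfolding alloc_pmf_def pmf_bind using assms
proof (subst integral_pmf_of_set)
  show "(\<Sum>i\<in>{..<t}. pmf (Pi_pmf {..<t} undefined (\<lambda>j. if j = i then P else Q)) \<omega>) / real (card {..<t})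
      = (\<Sum>i<t. \<Prod>j<t. pmf (if j = i then P else Q) (\<omega> j)) / t"
  proof -
    have "(\<Sum>i\<in>{..<t}. pmf (Pi_pmf {..<t} undefined (\<lambda>j. if j = i then P else Q)) \<omega>)
        = (\<Sum>i<t. \<Prod>j<t. pmf (if j = i then P else Q) (\<omega> j))"
      by (intro sum.cong refl pmf_Pi') (use assms in auto)
    then show ?thesis by simp
  qed
qed (use assms in \<open>auto simp: lessThan_empty_iff\<close>)

lemma alloc_ratio:
  assumes "t \<ge> 1" "\<forall>j. j \<notin> {..<t} \<longrightarrow> \<omega> j = undefined" "\<forall>j<t. pmf Q (\<omega> j) > 0"
  shows "pmf (alloc_pmf t P Q) \<omega> = pmf (prod_pmf t Q) \<omega> * (\<Sum>i<t. pmf P (\<omega> i) / pmf Q (\<omega> i)) / t"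
proof -
  have tm: "(\<Prod>j<t. pmf (if j = i then P else Q) (\<omega> j)) = pmf P (\<omega> i) / pmf Q (\<omega> i) * (\<Prod>j<t. pmf Q (\<omega> j))"
    if "i < t" for i
  proof -
    have "(\<Prod>j<t. pmf (if j = i then P else Q) (\<omega> j)) = pmf P (\<omega> i) * (\<Prod>j\<in>{..<t}-{i}. pmf (if j = i then P else Q) (\<omega> j))"
      using that by (subst prod.remove[of _ i]) auto
    also have "(\<Prod>j\<in>{..<t}-{i}. pmf (if j = i then P else Q) (\<omega> j)) = (\<Prod>j\<in>{..<t}-{i}. pmf Q (\<omega> j))"
      by (intro prod.cong) auto
    finally have 1: "(\<Prod>j<t. pmf (if j = i then P else Q) (\<omega> j)) = pmf P (\<omega> i) * (\<Prod>j\<in>{..<t}-{i}. pmf Q (\<omega> j))" .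
    have 2: "(\<Prod>j<t. pmf Q (\<omega> j)) = pmf Q (\<omega> i) * (\<Prod>j\<in>{..<t}-{i}. pmf Q (\<omega> j))"
      using that by (subst prod.remove[of _ i]) auto
    have "pmf Q (\<omega> i) > 0" using assms(3) that by auto
    then show ?thesis unfolding 1 2 by (simp add: field_simps)
  qed
  have "pmf (alloc_pmf t P Q) \<omega> = (\<Sum>i<t. pmf P (\<omega> i) / pmf Q (\<omega> i) * (\<Prod>j<t. pmf Q (\<omega> j))) / t"
    using assms(1,2) by (simp add: pmf_alloc tm del: pmf_of_set)
  also have "\<dots> = pmf (prod_pmf t Q) \<omega> * (\<Sum>i<t. pmf P (\<omega> i) / pmf Q (\<omega> i)) / t"
    by (subst sum_distrib_right[symmetric]) (simp add: pmf_prod_pmf assms(2))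
  finally show ?thesis .
qed

theorem mainTheorem2:
  fixes t :: nat and P Q :: "'a pmf"
  assumes "t \<ge> 1"
  shows "privacy_loss (alloc_pmf t P Q) (prod_pmf t Q) = psi_rem t (privacy_loss P Q)
       \<and> privacy_loss (prod_pmf t Q) (alloc_pmf t P Q) = psi_add t (privacy_loss Q P)"
proof -
  define rho :: "'a \<Rightarrow> ennreal" where
    "rho = (\<lambda>x. if pmf Q x = 0 then \<infinity> else ennreal (pmf P x / pmf Q x))"
  define lam where "lam = (\<lambda>\<omega>. if pmf Q \<omega> = 0 then \<infinity> else ereal (ln (pmf P \<omega> / pmf Q \<omega>)))"
  define mu where "mu = (\<lambda>\<omega>. if pmf P \<omega> = 0 then \<infinity> else ereal (ln (pmf Q \<omega> / pmf P \<omega>)))"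
  define H1 :: "ennreal \<Rightarrow> ereal" where "H1 = (\<lambda>s. eln (ennreal (1 / real t) * s))"
  define H2 :: "ennreal \<Rightarrow> ereal" where "H2 = (\<lambda>s. - eln (ennreal (1 / real t) * s))"
  have t0: "t > 0" using assms by simp
  have L: "privacy_loss P Q = map_pmf lam P" unfolding lam_def privacy_loss_def ..
  have D: "privacy_loss Q P = map_pmf mu Q" unfolding mu_def privacy_loss_def ..
  have lamrho: "eexp (lam x) = rho x" if "x \<in> set_pmf P" for x
  proof (cases "pmf Q x = 0")
    case True then show ?thesis by (simp add: lam_def rho_def)
  next
    case False
    then have "pmf Q x > 0" "pmf P x > 0" using that by (auto simp: set_pmf_iff order.order_iff_strict)
    then show ?thesis using False by (simp add: lam_def rho_def)
  qed
  have murho: "eexp (- mu x) = rho x" if "x \<in> set_pmf Q" for x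
  proof (cases "pmf P x = 0")
    case True then show ?thesis using that by (simp add: mu_def rho_def set_pmf_iff)
  next
    case False
    then have pos: "pmf Q x > 0" "pmf P x > 0" using that by (auto simp: set_pmf_iff order.order_iff_strict)
    have "exp (- ln (pmf Q x / pmf P x)) = pmf P x / pmf Q x" using pos by (simp add: exp_minus)
    then show ?thesis using False pos by (simp add: mu_def rho_def)
  qed
  have core: "pmf (prod_pmf t Q) \<omega> > 0 \<and>
      pmf (alloc_pmf t P Q) \<omega> = pmf (prod_pmf t Q) \<omega> * (\<Sum>i<t. pmf P (\<omega> i) / pmf Q (\<omega> i)) / t \<and>
      (\<Sum>j<t. rho (\<omega> j)) = ennreal (\<Sum>i<t. pmf P (\<omega> i) / pmf Q (\<omega> i))"
    if ext: "\<forall>j. j \<notin> {..<t} \<longrightarrow> \<omega> j = undefined" and pos: "\<forall>j<t. pmf Q (\<omega> j) > 0" for \<omega>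
  proof (intro conjI)
    show "pmf (prod_pmf t Q) \<omega> > 0" using ext pos by (simp add: pmf_prod_pmf) (rule prod_pos, auto)
    show "pmf (alloc_pmf t P Q) \<omega> = pmf (prod_pmf t Q) \<omega> * (\<Sum>i<t. pmf P (\<omega> i) / pmf Q (\<omega> i)) / t"
      by (rule alloc_ratio[OF assms ext pos])
    have "(\<Sum>j<t. rho (\<omega> j)) = (\<Sum>j<t. ennreal (pmf P (\<omega> j) / pmf Q (\<omega> j)))"
      using pos by (intro sum.cong) (auto simp: rho_def)
    also have "\<dots> = ennreal (\<Sum>i<t. pmf P (\<omega> i) / pmf Q (\<omega> i))"
      by (rule sum_ennreal) simp
    finally show "(\<Sum>j<t. rho (\<omega> j)) = ennreal (\<Sum>i<t. pmf P (\<omega> i) / pmf Q (\<omega> i))" .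
  qed
  have Hs: "ennreal (1 / real t) * ennreal s = ennreal (s / t)" if "s \<ge> 0" for s
    using that by (simp add: ennreal_mult[symmetric])
  have elnpos: "eln (ennreal x) = ereal (ln x)" if "x > 0" for x
    using that by (simp add: eln_def)
  have R2: "psi_add t (privacy_loss Q P) = map_pmf H2 (SD rho Q t)"
  proof -
    have "psi_add t (privacy_loss Q P)
        = map_pmf H2 (map_pmf (\<lambda>xs. \<Sum>i<t. eexp (- xs i)) (Pi_pmf {..<t} undefined (\<lambda>_. map_pmf mu Q)))"
      unfolding psi_add_def prod_pmf_def D H2_def map_pmf_comp ..
    also have "\<dots> = map_pmf H2 (SD (\<lambda>x. eexp (- mu x)) Q t)"
      apply (subst sum_Pi_SD)
       apply simp
      apply (simp only: card_lessThan SD_map)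
      done
    also have "\<dots> = map_pmf H2 (SD rho Q t)"
      by (intro arg_cong[where f="map_pmf H2"] SD_cong murho)
    finally show ?thesis .
  qed
  have L2: "privacy_loss (prod_pmf t Q) (alloc_pmf t P Q) = map_pmf H2 (SD rho Q t)"
  proof -
    have "privacy_loss (prod_pmf t Q) (alloc_pmf t P Q)
        = map_pmf (\<lambda>\<omega>. H2 (\<Sum>j<t. rho (\<omega> j))) (prod_pmf t Q)"
      unfolding privacy_loss_def
    proof (rule map_pmf_cong[OF refl])
      fix \<omega> assume "\<omega> \<in> set_pmf (prod_pmf t Q)"
      then have ext: "\<forall>j. j \<notin> {..<t} \<longrightarrow> \<omega> j = undefined" and pos: "\<forall>j<t. pmf Q (\<omega> j) > 0"
        unfolding prod_pmf_def by (auto simp: set_Pi_pmf PiE_dflt_def set_pmf_iff order.order_iff_strict)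
      define s where "s = (\<Sum>i<t. pmf P (\<omega> i) / pmf Q (\<omega> i))"
      have s0: "s \<ge> 0" unfolding s_def by (intro sum_nonneg) simp
      note c = core[OF ext pos, folded s_def]
      show "(if pmf (alloc_pmf t P Q) \<omega> = 0 then \<infinity> else ereal (ln (pmf (prod_pmf t Q) \<omega> / pmf (alloc_pmf t P Q) \<omega>)))
          = H2 (\<Sum>j<t. rho (\<omega> j))"
      proof (cases "s = 0")
        case True
        then show ?thesis using c by (simp add: H2_def eln_def)
      next
        case False
        then have sp: "s > 0" using s0 by simp
        have "pmf (prod_pmf t Q) \<omega> / pmf (alloc_pmf t P Q) \<omega> = t / s"
        proof -
          have pq: "pmf (prod_pmf t Q) \<omega> > 0" using c by blast
          have eq: "pmf (alloc_pmf t P Q) \<omega> = pmf (prod_pmf t Q) \<omega> * s / t" using c by blast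
          show ?thesis unfolding eq using pq sp t0 by (simp add: field_simps)
        qed
        moreover have "ln (t / s) = - ln (s / t)" using sp t0 by (simp add: ln_div)
        ultimately show ?thesis using c sp t0 s0
          by (simp add: H2_def Hs elnpos)
      qed
    qed
    also have "\<dots> = map_pmf H2 (SD rho Q t)"
      unfolding prod_pmf_def map_pmf_comp[symmetric, of H2 "\<lambda>\<omega>. \<Sum>j<t. rho (\<omega> j)"]
      apply (subst sum_Pi_SD)
       apply simp
      apply (simp only: card_lessThan)
      done
    finally show ?thesis .
  qed
  have part2: "privacy_loss (prod_pmf t Q) (alloc_pmf t P Q) = psi_add t (privacy_loss Q P)"
    using L2 R2 by simp
  have R1: "psi_rem t (privacy_loss P Q) = map_pmf (\<lambda>(y, s). H1 (rho y + s)) (pair_pmf P (SD rho Q (t - 1)))"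
  proof -
    have "psi_rem t (privacy_loss P Q) = map_pmf (\<lambda>(x, f). H1 (eexp x + (\<Sum>j\<in>{..<t-1}. eexp (- f j))))
        (pair_pmf (map_pmf lam P) (Pi_pmf {..<t-1} undefined (\<lambda>_. map_pmf mu Q)))"
      unfolding psi_rem_def dual_eq unfolding L D prod_pmf_def H1_def ..
    also have "\<dots> = map_pmf (\<lambda>(x, s). H1 (eexp x + s))
        (pair_pmf (map_pmf lam P) (SD (\<lambda>y. eexp (- y)) (map_pmf mu Q) (card {..<t-1})))"
      by (rule pair_sum_Pi_SD[where G="\<lambda>x s. H1 (eexp x + s)" and g="\<lambda>y. eexp (- y)"]) simp
    also have "SD (\<lambda>y. eexp (- y)) (map_pmf mu Q) (card {..<t-1}) = SD rho Q (t - 1)"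
      unfolding SD_map card_lessThan by (intro SD_cong murho)
    also have "map_pmf (\<lambda>(x, s). H1 (eexp x + s)) (pair_pmf (map_pmf lam P) (SD rho Q (t - 1)))
        = map_pmf (\<lambda>(y, s). H1 (rho y + s)) (pair_pmf P (SD rho Q (t - 1)))"
      unfolding pair_map_pmf1 map_pmf_comp
      by (rule map_pmf_cong) (auto simp: lamrho)
    finally show ?thesis .
  qed
  have slice: "map_pmf (\<lambda>\<omega>. if pmf (prod_pmf t Q) \<omega> = 0 then \<infinity>
        else ereal (ln (pmf (alloc_pmf t P Q) \<omega> / pmf (prod_pmf t Q) \<omega>)))
        (Pi_pmf {..<t} undefined (\<lambda>j. if j = i then P else Q))
      = map_pmf (\<lambda>(y, s). H1 (rho y + s)) (pair_pmf P (SD rho Q (t - 1)))" if it: "i < t" for i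
  proof -
    define A where "A = {..<t} - {i}"
    have ins: "{..<t} = insert i A" using it unfolding A_def by auto
    have finA: "finite A" "i \<notin> A" unfolding A_def by auto
    have cardA: "card A = t - 1" unfolding A_def using it by simp
    have "Pi_pmf {..<t} undefined (\<lambda>j. if j = i then P else Q)
        = map_pmf (\<lambda>(y, f). f(i := y)) (pair_pmf P (Pi_pmf A undefined (\<lambda>_. Q)))"
    proof -
      have "Pi_pmf A undefined (\<lambda>j. if j = i then P else Q) = Pi_pmf A undefined (\<lambda>_. Q)"
        using finA by (intro Pi_pmf_cong) auto
      then show ?thesis unfolding ins Pi_pmf_insert[OF finA] by simp
    qed
    note piEq = this
    have "map_pmf (\<lambda>\<omega>. if pmf (prod_pmf t Q) \<omega> = 0 then \<infinity>
        else ereal (ln (pmf (alloc_pmf t P Q) \<omega> / pmf (prod_pmf t Q) \<omega>)))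
        (Pi_pmf {..<t} undefined (\<lambda>j. if j = i then P else Q))
      = map_pmf (\<lambda>(y, f). H1 (rho y + (\<Sum>j\<in>A. rho (f j)))) (pair_pmf P (Pi_pmf A undefined (\<lambda>_. Q)))"
      unfolding piEq map_pmf_comp
    proof (intro map_pmf_cong refl)
      fix yf assume "yf \<in> set_pmf (pair_pmf P (Pi_pmf A undefined (\<lambda>_. Q)))"
      then obtain y f where yf: "yf = (y, f)" and y: "pmf P y > 0"
        and fA: "\<forall>j\<in>A. pmf Q (f j) > 0" and fn: "\<forall>j. j \<notin> A \<longrightarrow> f j = undefined"
        using finA by (cases yf) (auto simp: set_Pi_pmf PiE_dflt_def set_pmf_iff order.order_iff_strict)
      define \<omega> where "\<omega> = f(i := y)"
      have ext: "\<forall>j. j \<notin> {..<t} \<longrightarrow> \<omega> j = undefined"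
        using fn it unfolding \<omega>_def ins by auto
      have sumsplit: "(\<Sum>j<t. rho (\<omega> j)) = rho y + (\<Sum>j\<in>A. rho (f j))"
      proof -
        have "(\<Sum>j<t. rho (\<omega> j)) = rho (\<omega> i) + (\<Sum>j\<in>A. rho (\<omega> j))"
          unfolding ins using finA by simp
        also have "(\<Sum>j\<in>A. rho (\<omega> j)) = (\<Sum>j\<in>A. rho (f j))"
          using finA unfolding \<omega>_def by (intro sum.cong) auto
        finally show ?thesis unfolding \<omega>_def by simp
      qed
      have "(if pmf (prod_pmf t Q) \<omega> = 0 then \<infinity>
          else ereal (ln (pmf (alloc_pmf t P Q) \<omega> / pmf (prod_pmf t Q) \<omega>))) = H1 (\<Sum>j<t. rho (\<omega> j))"
      proof (cases "pmf Q y = 0")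
        case True
        have "pmf (prod_pmf t Q) \<omega> = 0"
          unfolding pmf_prod_pmf[OF ext] using it True by (auto simp: \<omega>_def)
        moreover have "rho y = \<infinity>" using True by (simp add: rho_def)
        ultimately show ?thesis using t0 unfolding sumsplit H1_def by (simp add: eln_def ennreal_mult_top)
      next
        case False
        have pos: "\<forall>j<t. pmf Q (\<omega> j) > 0"
        proof (intro allI impI)
          fix j assume "j < t"
          show "pmf Q (\<omega> j) > 0"
          proof (cases "j = i")
            case True then show ?thesis using False by (simp add: \<omega>_def order.order_iff_strict)
          next
            case False then have "j \<in> A" using \<open>j < t\<close> unfolding A_def by auto
            then show ?thesis using fA False by (simp add: \<omega>_def)
          qed
        qed
        define s where "s = (\<Sum>i<t. pmf P (\<omega> i) / pmf Q (\<omega> i))"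
        note c = core[OF ext pos, folded s_def]
        have "pmf P (\<omega> i) / pmf Q (\<omega> i) \<le> s"
          unfolding s_def using it by (intro member_le_sum) auto
        moreover have "pmf P (\<omega> i) / pmf Q (\<omega> i) > 0"
        proof -
          have "pmf Q (\<omega> i) > 0" using pos it by blast
          then show ?thesis using y by (simp add: \<omega>_def)
        qed
        ultimately have sp: "s > 0" by linarith
        have pq: "pmf (prod_pmf t Q) \<omega> > 0" using c by blast
        have eq: "pmf (alloc_pmf t P Q) \<omega> = pmf (prod_pmf t Q) \<omega> * s / t" using c by blast
        have sum: "(\<Sum>j<t. rho (\<omega> j)) = ennreal s" using c by blast
        have "pmf (alloc_pmf t P Q) \<omega> / pmf (prod_pmf t Q) \<omega> = s / t"
          unfolding eq using pq by simp
        then show ?thesis using pq sp t0 unfolding sum H1_def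
          by (simp add: Hs elnpos)
      qed
      then show "(if pmf (prod_pmf t Q) (case yf of (y, f) \<Rightarrow> f(i := y)) = 0 then \<infinity>
          else ereal (ln (pmf (alloc_pmf t P Q) (case yf of (y, f) \<Rightarrow> f(i := y))
             / pmf (prod_pmf t Q) (case yf of (y, f) \<Rightarrow> f(i := y)))))
        = (case yf of (y, f) \<Rightarrow> H1 (rho y + (\<Sum>j\<in>A. rho (f j))))"
        using sumsplit unfolding yf \<omega>_def prod.case by (simp only:)
    qed
    also have "\<dots> = map_pmf (\<lambda>(y, s). H1 (rho y + s)) (pair_pmf P (SD rho Q (card A)))"
      by (rule pair_sum_Pi_SD[where G="\<lambda>y s. H1 (rho y + s)" and g=rho, OF finA(1)])
    finally show ?thesis unfolding cardA .
  qed
  have L1: "privacy_loss (alloc_pmf t P Q) (prod_pmf t Q)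
      = map_pmf (\<lambda>(y, s). H1 (rho y + s)) (pair_pmf P (SD rho Q (t - 1)))"
  proof -
    have "privacy_loss (alloc_pmf t P Q) (prod_pmf t Q)
      = bind_pmf (pmf_of_set {..<t}) (\<lambda>i. map_pmf (\<lambda>\<omega>. if pmf (prod_pmf t Q) \<omega> = 0 then \<infinity>
        else ereal (ln (pmf (alloc_pmf t P Q) \<omega> / pmf (prod_pmf t Q) \<omega>)))
        (Pi_pmf {..<t} undefined (\<lambda>j. if j = i then P else Q)))"
      unfolding privacy_loss_def
      by (subst (2) alloc_pmf_def) (rule map_bind_pmf)
    also have "\<dots> = bind_pmf (pmf_of_set {..<t}) (\<lambda>_. map_pmf (\<lambda>(y, s). H1 (rho y + s)) (pair_pmf P (SD rho Q (t - 1))))"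
      using t0 by (intro bind_pmf_cong refl) (auto simp: slice lessThan_empty_iff)
    finally show ?thesis by simp
  qed
  show ?thesis using part2 L1 R1 by simp
qed

end
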